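(* For every graph $G$: (1) if the cutset hypergraph $\mathcal{C}(G)$ is $1$-Sperner, then $G$ is connected-domishold; (2) if $G$ is connected-domishold, then $\mathcal{C}(G)$ is $2$-asummable.
   Context: A connected dominating set (CD set) of a connected graph $G$ is a set $S\subseteq V(G)$ that is dominating (every vertex outside $S$ has a neighbor in $S$) and induces a connected subgraph. A graph $G=(V,E)$ is connected-domishold if there exist $w:V\to\mathbb{R}_{\ge 0}$, $t\in\mathbb{R}_{\ge 0}$ such that for all $S\subseteq V$, $\sum_{x\in S}w(x)\ge t$ iff $S$ is a CD set; disconnected graphs are considered connected-domishold by convention. A cutset is a set $S\subseteq V(G)$ with $G-S$ disconnected; minimal if it contains no other cutset. The cutset hypergraph $\mathcal{C}(G)$ has vertex set $V(G)$ and hyperedges the minimal cutsets. A hypergraph is $1$-Sperner if for every two distinct hyperedges $e,f$, $\min\{|e\setminus f|,|f\setminus e|\}=1$. A hypergraph $\mathcal{H}=(V,E)$ is $2$-summable if there exist subsets $A_1,A_2\subseteq V$, each containing a hyperedge, and $B_1,B_2\subseteq V$, each containing no hyperedge, such that for every $v\in V$, $|\{i:v\in A_i\}|=|\{i:v\in B_i\}|$; it is $2$-asummable otherwise. *)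

theory Defs
  imports Complex_Main
begin

definition graph :: "'a set \<Rightarrow> ('a \<Rightarrow> 'a \<Rightarrow> bool) \<Rightarrow> bool" where
  "graph V E \<longleftrightarrow> finite V \<and> (\<forall>x y. E x y \<longrightarrow> x \<in> V \<and> y \<in> V)
     \<and> (\<forall>x y. E x y \<longrightarrow> E y x) \<and> (\<forall>x. \<not> E x x)"

definition connected_on :: "('a \<Rightarrow> 'a \<Rightarrow> bool) \<Rightarrow> 'a set \<Rightarrow> bool" where
  "connected_on E S \<longleftrightarrow>
     (\<forall>x\<in>S. \<forall>y\<in>S. (\<lambda>u v. E u v \<and> u \<in> S \<and> v \<in> S)\<^sup>*\<^sup>* x y)"

definition dominating :: "'a set \<Rightarrow> ('a \<Rightarrow> 'a \<Rightarrow> bool) \<Rightarrow> 'a set \<Rightarrow> bool" where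
  "dominating V E S \<longleftrightarrow> S \<subseteq> V \<and> (\<forall>v\<in>V - S. \<exists>u\<in>S. E v u)"

definition cd_set :: "'a set \<Rightarrow> ('a \<Rightarrow> 'a \<Rightarrow> bool) \<Rightarrow> 'a set \<Rightarrow> bool" where
  "cd_set V E S \<longleftrightarrow> dominating V E S \<and> connected_on E S"

definition connected_domishold :: "'a set \<Rightarrow> ('a \<Rightarrow> 'a \<Rightarrow> bool) \<Rightarrow> bool" where
  "connected_domishold V E \<longleftrightarrow> \<not> connected_on E V \<or>
     (\<exists>(w :: 'a \<Rightarrow> real) (t :: real). (\<forall>x\<in>V. w x \<ge> 0) \<and> t \<ge> 0 \<and>
        (\<forall>S. S \<subseteq> V \<longrightarrow> (sum w S \<ge> t \<longleftrightarrow> cd_set V E S)))"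

definition cutset :: "'a set \<Rightarrow> ('a \<Rightarrow> 'a \<Rightarrow> bool) \<Rightarrow> 'a set \<Rightarrow> bool" where
  "cutset V E S \<longleftrightarrow> S \<subseteq> V \<and> \<not> connected_on E (V - S)"

definition minimal_cutset :: "'a set \<Rightarrow> ('a \<Rightarrow> 'a \<Rightarrow> bool) \<Rightarrow> 'a set \<Rightarrow> bool" where
  "minimal_cutset V E S \<longleftrightarrow> cutset V E S \<and> (\<forall>T. T \<subset> S \<longrightarrow> \<not> cutset V E T)"

definition cutset_hyperedges :: "'a set \<Rightarrow> ('a \<Rightarrow> 'a \<Rightarrow> bool) \<Rightarrow> 'a set set" where
  "cutset_hyperedges V E = {S. minimal_cutset V E S}"

text \<open>Hypergraphs are given as (vertex set, set of hyperedges).\<close>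
definition one_sperner :: "'a set set \<Rightarrow> bool" where
  "one_sperner H \<longleftrightarrow> (\<forall>e\<in>H. \<forall>f\<in>H. e \<noteq> f \<longrightarrow> min (card (e - f)) (card (f - e)) = 1)"

definition two_summable :: "'a set \<Rightarrow> 'a set set \<Rightarrow> bool" where
  "two_summable V H \<longleftrightarrow> (\<exists>A1 A2 B1 B2.
     A1 \<subseteq> V \<and> A2 \<subseteq> V \<and> B1 \<subseteq> V \<and> B2 \<subseteq> V \<and>
     (\<exists>e\<in>H. e \<subseteq> A1) \<and> (\<exists>e\<in>H. e \<subseteq> A2) \<and>
     (\<forall>e\<in>H. \<not> e \<subseteq> B1) \<and> (\<forall>e\<in>H. \<not> e \<subseteq> B2) \<and>
     (\<forall>v\<in>V. (of_bool (v \<in> A1) + of_bool (v \<in> A2) :: nat)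
             = of_bool (v \<in> B1) + of_bool (v \<in> B2)))"

definition two_asummable :: "'a set \<Rightarrow> 'a set set \<Rightarrow> bool" where
  "two_asummable V H \<longleftrightarrow> \<not> two_summable V H"

end

theory Submission
  imports Defs
begin


definition st :: "'a set \<Rightarrow> ('a set \<Rightarrow> bool) \<Rightarrow> bool" where
  "st A F \<longleftrightarrow> (\<exists>(w::'a\<Rightarrow>real) t. (\<forall>v\<in>A. 1 \<le> w v) \<and>
     (\<forall>X. X \<subseteq> A \<longrightarrow> (F X \<longrightarrow> t \<le> sum w X) \<and> (\<not> F X \<longrightarrow> sum w X + 1 \<le> t)))"

lemma st_cong: "st A F \<Longrightarrow> (\<And>X. X \<subseteq> A \<Longrightarrow> F X = G X) \<Longrightarrow> st A G"
  unfolding st_def by metis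

lemma st_false: assumes "finite A" shows "st A (\<lambda>X. False)"
  unfolding st_def
proof (intro exI[of _ "\<lambda>_. 1"] exI[of _ "real (card A) + 1"] conjI ballI allI impI)
  fix X assume "X \<subseteq> A"
  then have "card X \<le> card A" using assms by (simp add: card_mono)
  then show "sum (\<lambda>_. 1::real) X + 1 \<le> real (card A) + 1" by simp
qed auto

lemma st_single: assumes "finite A" "e \<subseteq> A" shows "st A (\<lambda>X. e \<subseteq> X)"
proof -
  define N where "N = real (card A) + 1"
  define w where "w = (\<lambda>v. if v \<in> e then N else (1::real))"
  have N1: "N \<ge> 1" unfolding N_def by simp
  have fe: "finite e" using assms finite_subset by blast
  have we: "sum w e = N * card e" unfolding w_def by simp
  show ?thesis unfolding st_def
  proof (intro exI[of _ w] exI[of _ "N * card e"] conjI ballI allI impI)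
    fix v show "1 \<le> w v" using N1 unfolding w_def by simp
  next
    fix X assume XA: "X \<subseteq> A" and eX: "e \<subseteq> X"
    have fX: "finite X" using XA assms finite_subset by blast
    have "sum w e \<le> sum w X"
      by (rule sum_mono2[OF fX eX]) (use N1 in \<open>auto simp: w_def\<close>)
    then show "N * card e \<le> sum w X" using we by simp
  next
    fix X assume XA: "X \<subseteq> A" and eX: "\<not> e \<subseteq> X"
    have fX: "finite X" using XA assms finite_subset by blast
    have split: "sum w X = sum w (X \<inter> e) + sum w (X - e)"
      using fX by (metis Diff_Int_distrib2 Int_Diff_Un inf.idem sum.Int_Diff)
    have a: "sum w (X \<inter> e) = N * card (X \<inter> e)" unfolding w_def by simp
    have b: "sum w (X - e) = card (X - e)" unfolding w_def by simp
    have "X \<inter> e \<subset> e" using eX by blast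
    then have "card (X \<inter> e) < card e" by (rule psubset_card_mono[OF fe])
    then have c1: "card (X \<inter> e) + 1 \<le> card e" by simp
    have c2: "card (X - e) \<le> card A" using XA assms by (meson Diff_subset card_mono order_trans)
    have "real (card (X \<inter> e)) \<le> real (card e) - 1" using c1 by linarith
    then have "N * card (X \<inter> e) \<le> N * (real (card e) - 1)"
      using N1 by (intro mult_left_mono) auto
    then show "sum w X + 1 \<le> N * card e"
      using split a b c2 unfolding N_def by (simp add: algebra_simps)
  qed
qed




lemma st_glue:
  assumes fI: "finite I" and fO: "finite J" and zI: "z \<notin> I" and zO: "z \<notin> J"
    and IO: "I \<inter> J = {}" and s1: "st I F1" and s2: "st J F2" and F1I: "F1 I"
  shows "st (insert z (I \<union> J)) (\<lambda>X. (z \<in> X \<and> F1 (X \<inter> I)) \<or> (I \<subseteq> X \<and> F2 (X \<inter> J)))"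
proof -
  obtain w1 :: "'a \<Rightarrow> real" and t1 :: real where w1: "\<forall>v\<in>I. 1 \<le> w1 v" and
    t1: "\<And>X. X \<subseteq> I \<Longrightarrow> (F1 X \<longrightarrow> t1 \<le> sum w1 X) \<and> (\<not> F1 X \<longrightarrow> sum w1 X + 1 \<le> t1)"
    using s1 unfolding st_def by meson
  obtain w2 :: "'a \<Rightarrow> real" and t2 :: real where w2: "\<forall>v\<in>J. 1 \<le> w2 v" and
    t2: "\<And>X. X \<subseteq> J \<Longrightarrow> (F2 X \<longrightarrow> t2 \<le> sum w2 X) \<and> (\<not> F2 X \<longrightarrow> sum w2 X + 1 \<le> t2)"
    using s2 unfolding st_def by meson
  define W1 where "W1 = sum w1 I"
  define W2 where "W2 = sum w2 J"
  define c where "c = W2 + \<bar>t2\<bar> + 2"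
  define \<alpha> where "\<alpha> = c * (W1 - t1) + t2 + \<bar>t2\<bar> + 1"
  define w where "w = (\<lambda>v. if v = z then \<alpha> else if v \<in> I then c * w1 v else w2 v)"
  define T where "T = c * W1 + t2"
  have W2nn: "0 \<le> W2" unfolding W2_def using w2 by (smt (verit) sum_nonneg)
  have c2: "c \<ge> 2" unfolding c_def using W2nn by simp
  have t1W1: "t1 \<le> W1" using t1[of I] F1I unfolding W1_def by simp
  have s1le: "\<And>Y. Y \<subseteq> I \<Longrightarrow> sum w1 Y \<le> W1"
    unfolding W1_def by (rule sum_mono2[OF fI]) (use w1 in force)+
  have s2le: "\<And>Y. Y \<subseteq> J \<Longrightarrow> sum w2 Y \<le> W2"
    unfolding W2_def by (rule sum_mono2[OF fO]) (use w2 in force)+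
  have s1nn: "\<And>Y. Y \<subseteq> I \<Longrightarrow> 0 \<le> sum w1 Y"
    using w1 by (smt (verit) subsetD sum_nonneg)
  have s2nn: "\<And>Y. Y \<subseteq> J \<Longrightarrow> 0 \<le> sum w2 Y"
    using w2 by (smt (verit) subsetD sum_nonneg)
  have anonneg: "0 \<le> c * (W1 - t1)" using c2 t1W1 by simp
  have decomp: "sum w X = (if z \<in> X then \<alpha> else 0) + c * sum w1 (X \<inter> I) + sum w2 (X \<inter> J)"
    if XA: "X \<subseteq> insert z (I \<union> J)" for X
  proof -
    have fX: "finite X" using XA fI fO finite_subset by blast
    have eq: "X = (X \<inter> {z}) \<union> ((X \<inter> I) \<union> (X \<inter> J))" using XA by blast
    have "sum w X = sum w (X \<inter> {z}) + sum w ((X \<inter> I) \<union> (X \<inter> J))"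
      by (subst eq, rule sum.union_disjoint) (use fX zI zO in auto)
    also have "sum w ((X \<inter> I) \<union> (X \<inter> J)) = sum w (X \<inter> I) + sum w (X \<inter> J)"
      by (rule sum.union_disjoint) (use fX IO in auto)
    also have "sum w (X \<inter> {z}) = (if z \<in> X then \<alpha> else 0)"
      by (cases "z \<in> X") (auto simp: w_def Int_insert_right)
    also have "sum w (X \<inter> I) = sum (\<lambda>v. c * w1 v) (X \<inter> I)"
      by (rule sum.cong) (use zI in \<open>auto simp: w_def\<close>)
    also have "\<dots> = c * sum w1 (X \<inter> I)" by (simp add: sum_distrib_left)
    also have "sum w (X \<inter> J) = sum w2 (X \<inter> J)"
      by (rule sum.cong) (use zO IO in \<open>auto simp: w_def\<close>)
    finally show ?thesis by simp
  qed
  show ?thesis unfolding st_def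
  proof (intro exI[of _ w] exI[of _ T] conjI ballI allI impI)
    fix v assume "v \<in> insert z (I \<union> J)"
    show "1 \<le> w v"
    proof (cases "v = z")
      case True then show ?thesis using anonneg unfolding w_def \<alpha>_def by simp
    next
      case False
      show ?thesis
      proof (cases "v \<in> I")
        case True
        then have "c * 1 \<le> c * w1 v" using w1 c2 by (intro mult_left_mono) auto
        moreover have "w v = c * w1 v" using True False unfolding w_def by simp
        ultimately show ?thesis using c2 by linarith
      next
        case f2: False
        then show ?thesis using w2 False \<open>v \<in> insert z (I \<union> J)\<close> unfolding w_def by auto
      qed
    qed
  next
    fix X assume XA: "X \<subseteq> insert z (I \<union> J)"
      and FX: "(z \<in> X \<and> F1 (X \<inter> I)) \<or> (I \<subseteq> X \<and> F2 (X \<inter> J))"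
    note d = decomp[OF XA]
    have a1: "0 \<le> sum w2 (X \<inter> J)" by (rule s2nn) auto
    show "T \<le> sum w X"
    proof (cases "z \<in> X \<and> F1 (X \<inter> I)")
      case True
      then have "t1 \<le> sum w1 (X \<inter> I)" using t1[of "X \<inter> I"] by auto
      then have "c * t1 \<le> c * sum w1 (X \<inter> I)" using c2 by (intro mult_left_mono) auto
      then show ?thesis using True d a1 unfolding T_def \<alpha>_def by (simp add: algebra_simps)
    next
      case False
      with FX have IX: "I \<subseteq> X" and F2X: "F2 (X \<inter> J)" by auto
      have zX: "z \<notin> X" using False IX F1I by (metis inf.absorb_iff2)
      have "X \<inter> I = I" using IX by blast
      then show ?thesis using d zX t2[of "X \<inter> J"] F2X unfolding T_def W1_def by auto
    qed
  next
    fix X assume XA: "X \<subseteq> insert z (I \<union> J)"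
      and FX: "\<not> ((z \<in> X \<and> F1 (X \<inter> I)) \<or> (I \<subseteq> X \<and> F2 (X \<inter> J)))"
    note d = decomp[OF XA]
    have b2: "sum w2 (X \<inter> J) \<le> W2" by (rule s2le) auto
    show "sum w X + 1 \<le> T"
    proof (cases "z \<in> X")
      case True
      then have nF1: "\<not> F1 (X \<inter> I)" using FX by auto
      then have "sum w1 (X \<inter> I) + 1 \<le> t1" using t1[of "X \<inter> I"] by auto
      then have "c * (sum w1 (X \<inter> I) + 1) \<le> c * t1" using c2 by (intro mult_left_mono) auto
      then show ?thesis using True d b2 unfolding T_def \<alpha>_def c_def by (simp add: algebra_simps)
    next
      case zX: False
      show ?thesis
      proof (cases "I \<subseteq> X")
        case True
        then have "\<not> F2 (X \<inter> J)" using FX by auto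
        then have "sum w2 (X \<inter> J) + 1 \<le> t2" using t2[of "X \<inter> J"] by auto
        moreover have "X \<inter> I = I" using True by blast
        ultimately show ?thesis using d zX unfolding T_def W1_def by auto
      next
        case False
        then obtain v where vI: "v \<in> I" and vX: "v \<notin> X" by blast
        have "sum w1 (X \<inter> I) \<le> sum w1 (I - {v})"
          by (rule sum_mono2) (use fI vX w1 in auto)
        also have "\<dots> = W1 - w1 v" unfolding W1_def using fI vI by (simp add: sum_diff1)
        finally have "sum w1 (X \<inter> I) + 1 \<le> W1" using w1 vI by force
        then have "c * (sum w1 (X \<inter> I) + 1) \<le> c * W1" using c2 by (intro mult_left_mono) auto
        then show ?thesis using zX d b2 unfolding T_def c_def by (simp add: algebra_simps)
      qed
    qed
  qed
qed




lemma card_diff_le: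
  assumes "finite a" "finite b" "card a \<le> card b"
  shows "card (a - b) \<le> card (b - a)"
proof -
  have "card (a - b) = card a - card (a \<inter> b)" using assms by (simp add: card_Diff_subset_Int)
  moreover have "card (b - a) = card b - card (b \<inter> a)" using assms by (simp add: card_Diff_subset_Int)
  moreover have "a \<inter> b = b \<inter> a" by blast
  ultimately show ?thesis using assms(3) by simp
qed

lemma sp_min:
  assumes "one_sperner H" "a \<in> H" "b \<in> H" "a \<noteq> b" "finite a" "finite b" "card a \<le> card b"
  shows "card (a - b) = 1"
proof -
  have "min (card (a - b)) (card (b - a)) = 1" using assms(1-4) unfolding one_sperner_def by blast
  moreover have "card (a - b) \<le> card (b - a)" by (rule card_diff_le) (use assms in auto)
  ultimately show ?thesis by simp
qed

lemma sp_pair: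
  assumes "one_sperner H" "a \<in> H" "b \<in> H" "a \<noteq> b"
  shows "card (a - b) = 1 \<or> card (b - a) = 1" "1 \<le> card (a - b)"
proof -
  have m: "min (card (a - b)) (card (b - a)) = 1" using assms unfolding one_sperner_def by blast
  then show "card (a - b) = 1 \<or> card (b - a) = 1" by linarith
  show "1 \<le> card (a - b)" using m by linarith
qed

lemma card1_eq: "card A = 1 \<Longrightarrow> z \<in> A \<Longrightarrow> A = {z}"
  by (metis card_1_singletonE singletonD)

lemma sperner_z:
  assumes fV: "finite V" and HV: "\<forall>e\<in>H. e \<subseteq> V" and sp: "one_sperner H"
    and e0: "e0 \<in> H" and f0: "f0 \<in> H" and ef0: "e0 \<noteq> f0"
  shows "\<exists>z. (\<exists>e\<in>H. z \<in> e) \<and> (\<exists>f\<in>H. z \<notin> f) \<and> (\<forall>e\<in>H. \<forall>f\<in>H. z \<in> e \<longrightarrow> z \<notin> f \<longrightarrow> e - {z} \<subseteq> f)"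
proof -
  have finH: "\<And>e. e \<in> H \<Longrightarrow> finite e" using HV fV finite_subset by blast
  obtain m where mH: "m \<in> H" and mmin: "\<forall>e. e \<in> H \<longrightarrow> card m \<le> card e"
    using ex_has_least_nat[of "\<lambda>e. e \<in> H" e0 card] e0 by blast
  obtain g where gH: "g \<in> H" "g \<noteq> m" using e0 f0 ef0 by metis
  have bound: "\<forall>y. y \<in> H - {m} \<longrightarrow> card y < Suc (card V)"
    using HV fV by (meson DiffD1 card_mono le_imp_less_Suc)
  obtain fs where fsH: "fs \<in> H - {m}" and fsmax: "\<forall>y. y \<in> H - {m} \<longrightarrow> card y \<le> card fs"
    using Lattices_Big.ex_has_greatest_nat[of "\<lambda>y. y \<in> H - {m}" g card "Suc (card V)"] gH bound
    by blast
  have "card (m - fs) = 1"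
    by (rule sp_min[OF sp mH]) (use fsH finH mH mmin in auto)
  then obtain z where mfs: "m - fs = {z}" by (metis card_1_singletonE)
  have zm: "z \<in> m" and zfs: "z \<notin> fs" using mfs by auto
  have key: "e - {z} \<subseteq> f" if eH: "e \<in> H" and fH: "f \<in> H" and ze: "z \<in> e" and zf: "z \<notin> f" for e f
  proof -
    have fm: "f \<noteq> m" using zm zf by auto
    have "card (m - f) = 1" by (rule sp_min[OF sp mH fH]) (use fm finH mH fH mmin in auto)
    then have mf: "m - f = {z}" using zm zf by (intro card1_eq) auto
    show ?thesis
    proof (cases "e = m")
      case True then show ?thesis using mf by auto
    next
      case em: False
      have "card (m - e) = 1" by (rule sp_min[OF sp mH eH]) (use em finH mH eH mmin in auto)
      then obtain y where me: "m - e = {y}" by (metis card_1_singletonE)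
      have yz: "y \<noteq> z" using me ze by auto
      have yf: "y \<in> f" using me mf yz by blast
      have ye: "y \<notin> e" using me by auto
      have yfs: "y \<in> fs" using me mfs yz by blast
      show ?thesis
      proof (rule ccontr)
        assume nsub: "\<not> e - {z} \<subseteq> f"
        have ef: "e \<noteq> f" using ze zf by auto
        have "card (e - f) \<noteq> 1"
        proof
          assume "card (e - f) = 1"
          then have "e - f = {z}" using ze zf by (intro card1_eq) auto
          then show False using nsub by auto
        qed
        then have "card (f - e) = 1" using sp_pair(1)[OF sp eH fH ef] by auto
        then have fe: "f - e = {y}" using yf ye by (intro card1_eq) auto
        have efs: "e \<noteq> fs" using ze zfs by auto
        have "card (e - fs) = 1"
          by (rule sp_min[OF sp eH]) (use fsH efs em finH eH fsmax in auto)
        then have efs1: "e - fs = {z}" using ze zfs by (intro card1_eq) auto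
        have ffs: "f \<subseteq> fs"
        proof
          fix x assume xf: "x \<in> f"
          show "x \<in> fs"
          proof (cases "x \<in> e")
            case True then have "x \<noteq> z" using xf zf by auto
            then show ?thesis using True efs1 by blast
          next
            case False then have "x = y" using fe xf by blast
            then show ?thesis using yfs by simp
          qed
        qed
        show False
        proof (cases "f = fs")
          case True then show False using efs1 nsub by auto
        next
          case False
          have "1 \<le> card (f - fs)" using sp_pair(2)[OF sp fH _ False] fsH by auto
          moreover have "f - fs = {}" using ffs by blast
          ultimately show False by simp
        qed
      qed
    qed
  qed
  show ?thesis using mH zm fsH zfs key by blast
qed




lemma sperner_st:
  "finite V \<Longrightarrow> \<forall>e\<in>H. e \<subseteq> V \<Longrightarrow> one_sperner H \<Longrightarrow> st V (\<lambda>X. \<exists>e\<in>H. e \<subseteq> X)"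
proof (induction "card V" arbitrary: V H rule: less_induct)
  case less
  note fV = less.prems(1) and HV = less.prems(2) and sp = less.prems(3)
  show ?case
  proof (cases "\<exists>e0 f0. e0 \<in> H \<and> f0 \<in> H \<and> e0 \<noteq> f0")
    case False
    show ?thesis
    proof (cases "H = {}")
      case True
      show ?thesis by (rule st_cong[OF st_false[OF fV]]) (use True in auto)
    next
      case ne: False
      then obtain e where eH: "e \<in> H" by blast
      then have He: "H = {e}" using False by blast
      show ?thesis by (rule st_cong[OF st_single[OF fV]]) (use He HV in auto)
    qed
  next
    case True
    then obtain e0 f0 where e0: "e0 \<in> H" and f0: "f0 \<in> H" and ef0: "e0 \<noteq> f0" by blast
    obtain z where zP: "\<exists>e\<in>H. z \<in> e" and zQ: "\<exists>f\<in>H. z \<notin> f"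
      and zk: "\<forall>e\<in>H. \<forall>f\<in>H. z \<in> e \<longrightarrow> z \<notin> f \<longrightarrow> e - {z} \<subseteq> f"
      using sperner_z[OF fV HV sp e0 f0 ef0] by blast
    define P where "P = {e \<in> H. z \<in> e}"
    define Q where "Q = {e \<in> H. z \<notin> e}"
    define I where "I = {v \<in> V. \<forall>q\<in>Q. v \<in> q}"
    define J where "J = V - {z} - I"
    define P' where "P' = (\<lambda>e. e - {z}) ` P"
    define Q' where "Q' = (\<lambda>q. q - I) ` Q"
    have zV: "z \<in> V" using zP HV by blast
    have zI: "z \<notin> I" using zQ unfolding I_def Q_def by auto
    have fI: "finite I" unfolding I_def using fV by simp
    have fJ: "finite J" unfolding J_def using fV by simp
    have IV: "I \<subseteq> V - {z}" using zI unfolding I_def by auto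
    have lt: "card (V - {z}) < card V" using fV zV by (rule card_Diff1_less)
    have "card I \<le> card (V - {z})" using IV fV by (intro card_mono) auto
    then have cI: "card I < card V" using lt by linarith
    have "card J \<le> card (V - {z})" using fV unfolding J_def by (intro card_mono) auto
    then have cJ: "card J < card V" using lt by linarith
    have P'I: "\<forall>a\<in>P'. a \<subseteq> I"
    proof
      fix a assume "a \<in> P'"
      then obtain e where eP: "e \<in> P" and ae: "a = e - {z}" unfolding P'_def by blast
      have "\<forall>q\<in>Q. a \<subseteq> q" using zk eP ae unfolding P_def Q_def by blast
      moreover have "a \<subseteq> V" using eP HV ae unfolding P_def by blast
      ultimately show "a \<subseteq> I" unfolding I_def by blast
    qed
    have Q'J: "\<forall>b\<in>Q'. b \<subseteq> J"
      using HV unfolding Q'_def Q_def J_def by blast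
    have spP: "one_sperner P'"
      unfolding one_sperner_def
    proof (intro ballI impI)
      fix a b assume "a \<in> P'" "b \<in> P'" "a \<noteq> b"
      then obtain e f where eP: "e \<in> P" and fP: "f \<in> P" and ae: "a = e - {z}" and bf: "b = f - {z}"
        unfolding P'_def by blast
      have ef: "e \<noteq> f" using ae bf \<open>a \<noteq> b\<close> by blast
      have "a - b = e - f" using ae bf eP fP unfolding P_def by blast
      moreover have "b - a = f - e" using ae bf eP fP unfolding P_def by blast
      ultimately show "min (card (a - b)) (card (b - a)) = 1"
        using sp eP fP ef unfolding one_sperner_def P_def by auto
    qed
    have spQ: "one_sperner Q'"
      unfolding one_sperner_def
    proof (intro ballI impI)
      fix a b assume "a \<in> Q'" "b \<in> Q'" "a \<noteq> b"
      then obtain e f where eP: "e \<in> Q" and fP: "f \<in> Q" and ae: "a = e - I" and bf: "b = f - I"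
        unfolding Q'_def by blast
      have ef: "e \<noteq> f" using ae bf \<open>a \<noteq> b\<close> by blast
      have "a - b = e - f" using ae bf eP fP unfolding I_def by blast
      moreover have "b - a = f - e" using ae bf eP fP unfolding I_def by blast
      ultimately show "min (card (a - b)) (card (b - a)) = 1"
        using sp eP fP ef unfolding one_sperner_def Q_def by auto
    qed
    have s1: "st I (\<lambda>X. \<exists>e\<in>P'. e \<subseteq> X)" by (rule less.hyps[OF cI fI P'I spP])
    have s2: "st J (\<lambda>X. \<exists>e\<in>Q'. e \<subseteq> X)" by (rule less.hyps[OF cJ fJ Q'J spQ])
    have F1I: "\<exists>e\<in>P'. e \<subseteq> I" using zP P'I unfolding P'_def P_def by blast
    have g: "st (insert z (I \<union> J)) (\<lambda>X. (z \<in> X \<and> (\<exists>e\<in>P'. e \<subseteq> X \<inter> I)) \<or> (I \<subseteq> X \<and> (\<exists>e\<in>Q'. e \<subseteq> X \<inter> J)))"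
      by (rule st_glue[OF fI fJ zI _ _ s1 s2 F1I]) (auto simp: J_def)
    have VV: "insert z (I \<union> J) = V" using zV IV unfolding J_def by blast
    show ?thesis
    proof (rule st_cong[OF g[unfolded VV]])
      fix X assume XV: "X \<subseteq> V"
      show "((z \<in> X \<and> (\<exists>e\<in>P'. e \<subseteq> X \<inter> I)) \<or> (I \<subseteq> X \<and> (\<exists>e\<in>Q'. e \<subseteq> X \<inter> J)))
            = (\<exists>e\<in>H. e \<subseteq> X)"
      proof
        assume "(z \<in> X \<and> (\<exists>e\<in>P'. e \<subseteq> X \<inter> I)) \<or> (I \<subseteq> X \<and> (\<exists>e\<in>Q'. e \<subseteq> X \<inter> J))"
        then show "\<exists>e\<in>H. e \<subseteq> X"
        proof
          assume "z \<in> X \<and> (\<exists>e\<in>P'. e \<subseteq> X \<inter> I)"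
          then show ?thesis unfolding P'_def P_def by blast
        next
          assume "I \<subseteq> X \<and> (\<exists>e\<in>Q'. e \<subseteq> X \<inter> J)"
          then show ?thesis unfolding Q'_def Q_def by blast
        qed
      next
        assume "\<exists>e\<in>H. e \<subseteq> X"
        then obtain e where eH: "e \<in> H" and eX: "e \<subseteq> X" by blast
        show "(z \<in> X \<and> (\<exists>e\<in>P'. e \<subseteq> X \<inter> I)) \<or> (I \<subseteq> X \<and> (\<exists>e\<in>Q'. e \<subseteq> X \<inter> J))"
        proof (cases "z \<in> e")
          case True
          have "e - {z} \<in> P'" unfolding P'_def P_def using eH True by blast
          moreover have "e - {z} \<subseteq> I" using P'I calculation by (rule bspec)
          moreover have "e - {z} \<subseteq> X" using eX by blast
          ultimately have "\<exists>e\<in>P'. e \<subseteq> X \<inter> I" by blast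
          then show ?thesis using True eX by blast
        next
          case False
          then have eQ: "e \<in> Q" unfolding Q_def using eH by blast
          have "e - I \<in> Q'" unfolding Q'_def using eQ by blast
          moreover have "e - I \<subseteq> J" using Q'J calculation by (rule bspec)
          moreover have "e - I \<subseteq> X" using eX by blast
          ultimately have "\<exists>e\<in>Q'. e \<subseteq> X \<inter> J" by blast
          moreover have "I \<subseteq> e" using eQ unfolding I_def by blast
          ultimately show ?thesis using eX by blast
        qed
      qed
    qed
  qed
qed




lemma conn_mono:
  assumes "S \<subseteq> T" "(\<lambda>u v. E u v \<and> u \<in> S \<and> v \<in> S)\<^sup>*\<^sup>* x y"
  shows "(\<lambda>u v. E u v \<and> u \<in> T \<and> v \<in> T)\<^sup>*\<^sup>* x y"
proof -
  have "(\<lambda>u v. E u v \<and> u \<in> S \<and> v \<in> S) \<le> (\<lambda>u v. E u v \<and> u \<in> T \<and> v \<in> T)" using assms(1) by auto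
  then show ?thesis by (rule predicate2D[OF rtranclp_mono assms(2)])
qed

lemma conn_sym:
  assumes g: "graph V E" and r: "(\<lambda>u v. E u v \<and> u \<in> S \<and> v \<in> S)\<^sup>*\<^sup>* x y"
  shows "(\<lambda>u v. E u v \<and> u \<in> S \<and> v \<in> S)\<^sup>*\<^sup>* y x"
  using r
proof (induction rule: rtranclp_induct)
  case base then show ?case by simp
next
  case (step y z)
  have "E z y" using step(2) g unfolding graph_def by blast
  then have "(\<lambda>u v. E u v \<and> u \<in> S \<and> v \<in> S) z y" using step(2) by simp
  then show ?case using step(3) by (rule converse_rtranclp_into_rtranclp)
qed

lemma min_cut_exists:
  assumes fV: "finite V"
  shows "cutset V E C \<Longrightarrow> \<exists>C'\<subseteq>C. minimal_cutset V E C'"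
proof (induction "card C" arbitrary: C rule: less_induct)
  case less
  show ?case
  proof (cases "minimal_cutset V E C")
    case True then show ?thesis by blast
  next
    case False
    then obtain T where TC: "T \<subset> C" and cT: "cutset V E T"
      using less.prems unfolding minimal_cutset_def by blast
    have "C \<subseteq> V" using less.prems unfolding cutset_def by simp
    then have fC: "finite C" using fV by (rule finite_subset)
    have "card T < card C" using TC fC by (rule psubset_card_mono[rotated])
    then obtain C' where "C' \<subseteq> T" "minimal_cutset V E C'" using less.hyps cT by blast
    then show ?thesis using TC by blast
  qed
qed

lemma cd_char:
  assumes g: "graph V E" and cV: "connected_on E V" and Vne: "V \<noteq> {}" and SV: "S \<subseteq> V"
  shows "cd_set V E S \<longleftrightarrow> S \<noteq> {} \<and> (\<forall>C. cutset V E C \<longrightarrow> S \<inter> C \<noteq> {})"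
proof
  assume cd: "cd_set V E S"
  have dom: "\<forall>v\<in>V - S. \<exists>u\<in>S. E v u" and cS: "connected_on E S"
    using cd unfolding cd_set_def dominating_def by auto
  show "S \<noteq> {} \<and> (\<forall>C. cutset V E C \<longrightarrow> S \<inter> C \<noteq> {})"
  proof (intro conjI allI impI)
    show "S \<noteq> {}" using dom Vne by blast
  next
    fix C assume cC: "cutset V E C"
    show "S \<inter> C \<noteq> {}"
    proof
      assume SC: "S \<inter> C = {}"
      define T where "T = V - C"
      have ST: "S \<subseteq> T" using SV SC unfolding T_def by blast
      have "\<not> connected_on E T" using cC unfolding cutset_def T_def by simp
      then obtain x y where xT: "x \<in> T" and yT: "y \<in> T"
        and nxy: "\<not> (\<lambda>u v. E u v \<and> u \<in> T \<and> v \<in> T)\<^sup>*\<^sup>* x y"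
        unfolding connected_on_def by auto
      have reach: "\<exists>s\<in>S. (\<lambda>u v. E u v \<and> u \<in> T \<and> v \<in> T)\<^sup>*\<^sup>* x s" if xT: "x \<in> T" for x
      proof (cases "x \<in> S")
        case True then show ?thesis by blast
      next
        case False
        then have "x \<in> V - S" using xT unfolding T_def by blast
        then obtain u where uS: "u \<in> S" and "E x u" using dom by blast
        then have "(\<lambda>u v. E u v \<and> u \<in> T \<and> v \<in> T) x u" using xT ST by blast
        then show ?thesis using uS by blast
      qed
      obtain sx where sx: "sx \<in> S" "(\<lambda>u v. E u v \<and> u \<in> T \<and> v \<in> T)\<^sup>*\<^sup>* x sx" using reach xT by blast
      obtain sy where sy: "sy \<in> S" "(\<lambda>u v. E u v \<and> u \<in> T \<and> v \<in> T)\<^sup>*\<^sup>* y sy" using reach yT by blast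
      have "(\<lambda>u v. E u v \<and> u \<in> S \<and> v \<in> S)\<^sup>*\<^sup>* sx sy" using cS sx sy unfolding connected_on_def by blast
      then have a: "(\<lambda>u v. E u v \<and> u \<in> T \<and> v \<in> T)\<^sup>*\<^sup>* sx sy" by (rule conn_mono[OF ST])
      have b: "(\<lambda>u v. E u v \<and> u \<in> T \<and> v \<in> T)\<^sup>*\<^sup>* sy y" using conn_sym[OF g sy(2)] .
      have "(\<lambda>u v. E u v \<and> u \<in> T \<and> v \<in> T)\<^sup>*\<^sup>* x y"
        using sx(2) a b by (meson rtranclp_trans)
      then show False using nxy by blast
    qed
  qed
next
  assume R: "S \<noteq> {} \<and> (\<forall>C. cutset V E C \<longrightarrow> S \<inter> C \<noteq> {})"
  have dom: "\<forall>v\<in>V - S. \<exists>u\<in>S. E v u"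
  proof
    fix v assume vVS: "v \<in> V - S"
    show "\<exists>u\<in>S. E v u"
    proof (rule ccontr)
      assume nn: "\<not> (\<exists>u\<in>S. E v u)"
      define C where "C = V - S - {v}"
      have VC: "V - C = insert v S" using SV vVS unfolding C_def by blast
      obtain s where sS: "s \<in> S" using R by blast
      have nr: "\<not> (\<lambda>u w. E u w \<and> u \<in> insert v S \<and> w \<in> insert v S)\<^sup>*\<^sup>* v s"
      proof
        assume "(\<lambda>u w. E u w \<and> u \<in> insert v S \<and> w \<in> insert v S)\<^sup>*\<^sup>* v s"
        then show False
        proof (cases rule: converse_rtranclpE)
          case base then show False using sS vVS by blast
        next
          case (step u)
          then have "E v u" "u \<in> insert v S" by auto
          moreover have "u \<noteq> v" using \<open>E v u\<close> g unfolding graph_def by blast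
          ultimately show False using nn by blast
        qed
      qed
      have CV: "C \<subseteq> V" unfolding C_def by blast
      have "\<not> connected_on E (V - C)" unfolding VC connected_on_def using nr sS by blast
      then have "cutset V E C" unfolding cutset_def using CV by blast
      moreover have "S \<inter> C = {}" unfolding C_def by blast
      ultimately show False using R by blast
    qed
  qed
  have conn: "connected_on E S"
  proof (rule ccontr)
    assume "\<not> connected_on E S"
    moreover have "V - (V - S) = S" using SV by blast
    ultimately have "cutset V E (V - S)" unfolding cutset_def by auto
    moreover have "S \<inter> (V - S) = {}" by blast
    ultimately show False using R by blast
  qed
  show "cd_set V E S" using SV dom conn by (simp add: cd_set_def dominating_def)
qed

lemma hits_iff:
  assumes fV: "finite V" and SV: "S \<subseteq> V"
  shows "(\<forall>C. cutset V E C \<longrightarrow> S \<inter> C \<noteq> {}) \<longleftrightarrow> \<not> (\<exists>e\<in>cutset_hyperedges V E. e \<subseteq> V - S)"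
proof
  assume h: "\<forall>C. cutset V E C \<longrightarrow> S \<inter> C \<noteq> {}"
  show "\<not> (\<exists>e\<in>cutset_hyperedges V E. e \<subseteq> V - S)"
  proof
    assume "\<exists>e\<in>cutset_hyperedges V E. e \<subseteq> V - S"
    then obtain e where "minimal_cutset V E e" "e \<subseteq> V - S" by (auto simp: cutset_hyperedges_def)
    then show False using h unfolding minimal_cutset_def by blast
  qed
next
  assume h: "\<not> (\<exists>e\<in>cutset_hyperedges V E. e \<subseteq> V - S)"
  show "\<forall>C. cutset V E C \<longrightarrow> S \<inter> C \<noteq> {}"
  proof (intro allI impI)
    fix C assume "cutset V E C"
    then obtain C' where C'C: "C' \<subseteq> C" and mC: "minimal_cutset V E C'" using min_cut_exists[OF fV] by blast
    have "C' \<subseteq> V" using mC unfolding minimal_cutset_def cutset_def by blast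
    moreover have "\<not> C' \<subseteq> V - S" using h mC unfolding cutset_hyperedges_def by blast
    ultimately show "S \<inter> C \<noteq> {}" using C'C by blast
  qed
qed




lemma stE:
  assumes "st A F"
  obtains w :: "'a \<Rightarrow> real" and t :: real where "\<forall>v\<in>A. 1 \<le> w v"
    "\<And>X. X \<subseteq> A \<Longrightarrow> (F X \<longrightarrow> t \<le> sum w X) \<and> (\<not> F X \<longrightarrow> sum w X + 1 \<le> t)"
  using assms unfolding st_def by blast

lemma part1:
  assumes g: "graph V E" and sp: "one_sperner (cutset_hyperedges V E)"
  shows "connected_domishold V E"
proof (cases "connected_on E V")
  case False then show ?thesis unfolding connected_domishold_def by blast
next
  case cV: True
  have fV: "finite V" using g unfolding graph_def by blast
  show ?thesis
  proof (cases "V = {}")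
    case True
    have "cd_set V E {}" using True unfolding cd_set_def dominating_def connected_on_def by simp
    then have "\<forall>S. S \<subseteq> V \<longrightarrow> (sum (\<lambda>_. 0::real) S \<ge> 0 \<longleftrightarrow> cd_set V E S)" using True by auto
    then show ?thesis unfolding connected_domishold_def by fastforce
  next
    case Vne: False
    define H where "H = cutset_hyperedges V E"
    have HV: "\<forall>e\<in>H. e \<subseteq> V" unfolding H_def cutset_hyperedges_def minimal_cutset_def cutset_def by blast
    have char: "cd_set V E S \<longleftrightarrow> S \<noteq> {} \<and> \<not> (\<exists>e\<in>H. e \<subseteq> V - S)" if SV: "S \<subseteq> V" for S
      using cd_char[OF g cV Vne SV] hits_iff[OF fV SV] unfolding H_def by simp
    show ?thesis
    proof (cases "H = {}")
      case True
      have "\<forall>S. S \<subseteq> V \<longrightarrow> (sum (\<lambda>_. 1::real) S \<ge> 1 \<longleftrightarrow> cd_set V E S)"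
      proof (intro allI impI)
        fix S assume SV: "S \<subseteq> V"
        have fS: "finite S" using SV fV finite_subset by blast
        have "sum (\<lambda>_. 1::real) S = real (card S)" by simp
        moreover have "card S \<ge> 1 \<longleftrightarrow> S \<noteq> {}" using fS by (simp add: Suc_le_eq card_gt_0_iff)
        ultimately show "(sum (\<lambda>_. 1::real) S \<ge> 1 \<longleftrightarrow> cd_set V E S)"
          using char[OF SV] True by simp
      qed
      then show ?thesis unfolding connected_domishold_def
        by (intro disjI2 exI[of _ "\<lambda>_. 1::real"] exI[of _ "1::real"]) auto
    next
      case Hne: False
      have "st V (\<lambda>X. \<exists>e\<in>H. e \<subseteq> X)"
        by (rule sperner_st[OF fV HV]) (use sp in \<open>simp add: H_def\<close>)
      then obtain w :: "'a \<Rightarrow> real" and t :: real where w1: "\<forall>v\<in>V. 1 \<le> w v" and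
        wt: "\<And>X. X \<subseteq> V \<Longrightarrow> ((\<exists>e\<in>H. e \<subseteq> X) \<longrightarrow> t \<le> sum w X) \<and> (\<not> (\<exists>e\<in>H. e \<subseteq> X) \<longrightarrow> sum w X + 1 \<le> t)"
        by (rule stE) (rule that)
      define W where "W = sum w V"
      have FV: "\<exists>e\<in>H. e \<subseteq> V" using Hne HV by blast
      have tW: "t \<le> W" using wt[of V] FV unfolding W_def by simp
      have eqv: "(sum w S \<ge> W - t + 1 \<longleftrightarrow> cd_set V E S)" if SV: "S \<subseteq> V" for S
      proof -
        have sd: "sum w (V - S) = W - sum w S" unfolding W_def using fV SV by (simp add: sum_diff)
        have ne: "\<not> (\<exists>e\<in>H. e \<subseteq> V - S) \<Longrightarrow> S \<noteq> {}" using FV by auto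
        have "cd_set V E S \<longleftrightarrow> \<not> (\<exists>e\<in>H. e \<subseteq> V - S)" using char[OF SV] ne by blast
        moreover have "\<not> (\<exists>e\<in>H. e \<subseteq> V - S) \<longleftrightarrow> sum w (V - S) + 1 \<le> t"
          using wt[of "V - S"] by force
        ultimately show ?thesis using sd by linarith
      qed
      show ?thesis unfolding connected_domishold_def
      proof (intro disjI2 exI[of _ w] exI[of _ "W - t + 1"] conjI ballI allI impI)
        fix x assume "x \<in> V" then show "0 \<le> w x" using w1 by force
      next
        show "0 \<le> W - t + 1" using tW by simp
      next
        fix S assume "S \<subseteq> V" then show "(W - t + 1 \<le> sum w S) = cd_set V E S" using eqv by blast
      qed
    qed
  qed
qed

lemma part2_core:
  assumes g: "graph V E" and cd: "connected_domishold V E" and H_def: "H = cutset_hyperedges V E"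
    and all: "A1 \<subseteq> V \<and> A2 \<subseteq> V \<and> B1 \<subseteq> V \<and> B2 \<subseteq> V \<and>
     (\<exists>e\<in>cutset_hyperedges V E. e \<subseteq> A1) \<and> (\<exists>e\<in>cutset_hyperedges V E. e \<subseteq> A2) \<and>
     (\<forall>e\<in>cutset_hyperedges V E. \<not> e \<subseteq> B1) \<and> (\<forall>e\<in>cutset_hyperedges V E. \<not> e \<subseteq> B2) \<and>
     (\<forall>v\<in>V. (of_bool (v \<in> A1) + of_bool (v \<in> A2) :: nat)
             = of_bool (v \<in> B1) + of_bool (v \<in> B2))"
  shows False
proof -
  have fV: "finite V" using g unfolding graph_def by blast
  have sub: "A1 \<subseteq> V" "A2 \<subseteq> V" "B1 \<subseteq> V" "B2 \<subseteq> V" using all by auto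
  have a1: "\<exists>e\<in>H. e \<subseteq> A1" and a2: "\<exists>e\<in>H. e \<subseteq> A2" using all unfolding H_def by auto
  have b1: "\<forall>e\<in>H. \<not> e \<subseteq> B1" and b2: "\<forall>e\<in>H. \<not> e \<subseteq> B2" using all unfolding H_def by auto
  have cnt: "\<forall>v\<in>V. (of_bool (v \<in> A1) + of_bool (v \<in> A2) :: nat) = of_bool (v \<in> B1) + of_bool (v \<in> B2)"
    using all by auto
  show False
  proof (cases "connected_on E V")
    case False
    have "minimal_cutset V E {}" unfolding minimal_cutset_def cutset_def using False by simp
    then have "{} \<in> H" unfolding H_def cutset_hyperedges_def by simp
    then show False using b1 by blast
  next
    case cV: True
    then obtain w :: "'a \<Rightarrow> real" and t where w0: "\<forall>x\<in>V. w x \<ge> 0"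
      and wt: "\<forall>S. S \<subseteq> V \<longrightarrow> (sum w S \<ge> t \<longleftrightarrow> cd_set V E S)"
      using cd unfolding connected_domishold_def by blast
    obtain e1 where e1H: "e1 \<in> H" and e1A: "e1 \<subseteq> A1" using a1 by blast
    have cut1: "cutset V E e1" using e1H unfolding H_def cutset_hyperedges_def minimal_cutset_def by blast
    have Vne: "V \<noteq> {}"
    proof
      assume "V = {}"
      then show False using cut1 unfolding cutset_def connected_on_def by simp
    qed
    have notcd: "sum w (V - A) < t" if AV: "A \<subseteq> V" and eA: "\<exists>e\<in>H. e \<subseteq> A" for A
    proof -
      obtain e where eH: "e \<in> H" and ea: "e \<subseteq> A" using eA by blast
      have "cutset V E e" using eH unfolding H_def cutset_hyperedges_def minimal_cutset_def by blast
      moreover have "(V - A) \<inter> e = {}" using ea by blast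
      ultimately have "\<not> cd_set V E (V - A)" using cd_char[OF g cV Vne, of "V - A"] by blast
      then show ?thesis using wt by force
    qed
    have iscd: "t \<le> sum w (V - B)" if BV: "B \<subseteq> V" and nb: "\<forall>e\<in>H. \<not> e \<subseteq> B" for B
    proof -
      have "\<not> (\<exists>e\<in>H. e \<subseteq> V - (V - B))" using nb BV by (metis Diff_Diff_Int inf.absorb_iff2)
      then have h: "\<forall>C. cutset V E C \<longrightarrow> (V - B) \<inter> C \<noteq> {}"
        using hits_iff[OF fV, of "V - B"] unfolding H_def by blast
      have "V - B \<noteq> {}"
      proof
        assume "V - B = {}"
        then have "e1 \<subseteq> B" using cut1 unfolding cutset_def by blast
        then show False using nb e1H by blast
      qed
      then have "cd_set V E (V - B)" using cd_char[OF g cV Vne, of "V - B"] h by blast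
      then show ?thesis using wt by blast
    qed
    have s: "sum w (V - A) = (\<Sum>v\<in>V. if v \<notin> A then w v else 0)" for A
    proof -
      have "V - A = {v \<in> V. v \<notin> A}" by blast
      then show ?thesis using fV by (simp add: sum.inter_filter)
    qed
    have pw: "(if v \<notin> A1 then w v else 0) + (if v \<notin> A2 then w v else 0)
            = (if v \<notin> B1 then w v else 0) + (if v \<notin> B2 then w v else 0)" if vV: "v \<in> V" for v
      using cnt vV by (cases "v \<in> A1"; cases "v \<in> A2"; cases "v \<in> B1"; cases "v \<in> B2") auto
    have "sum w (V - A1) + sum w (V - A2) = sum w (V - B1) + sum w (V - B2)"
      unfolding s sum.distrib[symmetric] using pw by (rule sum.cong[OF refl])
    moreover have "sum w (V - A1) < t" by (rule notcd[OF sub(1) a1])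
    moreover have "sum w (V - A2) < t" by (rule notcd[OF sub(2) a2])
    moreover have "t \<le> sum w (V - B1)" by (rule iscd[OF sub(3) b1])
    moreover have "t \<le> sum w (V - B2)" by (rule iscd[OF sub(4) b2])
    ultimately show False by linarith
  qed
qed

lemma part2:
  assumes g: "graph V E" and cd: "connected_domishold V E"
  shows "two_asummable V (cutset_hyperedges V E)"
  unfolding two_asummable_def two_summable_def
  apply (intro notI)
  apply (elim exE)
  apply (erule part2_core[OF g cd refl])
  done

theorem mainTheorem2:
  fixes V :: "'a set" and E :: "'a \<Rightarrow> 'a \<Rightarrow> bool"
  assumes "graph V E"
  shows "(one_sperner (cutset_hyperedges V E) \<longrightarrow> connected_domishold V E)
       \<and> (connected_domishold V E \<longrightarrow> two_asummable V (cutset_hyperedges V E))"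
  using part1[OF assms] part2[OF assms] by blast


end
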